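(* Let $V$ be a mixed lattice vector space and $p$ a mixed-monotone seminorm on $V$. Then $q(x)=p(s(x))$ defines a mixed lattice seminorm on $V$. If $p$ is a mixed-monotone norm, then $q$ is a mixed lattice norm.
   Context: A mixed lattice vector space $(V,\le,\preccurlyeq)$ is a real vector space $V$ with two partial orderings $\le$ (initial order) and $\preccurlyeq$ (specific order), each making $V$ a partially ordered vector space, with positive cones $V_p=\{x:0\le x\}$, $V_{sp}=\{x:0\preccurlyeq x\}$, such that: (1) for all $x,y$ the elements $x\curlyvee y=\min\{w: w\succcurlyeq x,\ w\ge y\}$ and $x\curlywedge y=\max\{w: w\preccurlyeq x,\ w\le y\}$ exist (min/max with respect to $\le$); (2) $x\preccurlyeq y$ implies $x\le y$; (3) $x\curlyvee y, x\curlywedge y\in V_{sp}$ whenever $x,y\in V_{sp}$. Notation: $x^u=0\curlyvee x$, $x^l=0\curlyvee(-x)$, $s(x)=x^u+x^l$. A seminorm (norm) $p$ is mixed-monotone if $0\preccurlyeq x\le y$ implies $p(x)\le p(y)$, and is a mixed lattice seminorm (norm) if $s(x)\le s(y)$ implies $p(x)\le p(y)$. *)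

theory Defs
  imports Main "HOL-Analysis.Analysis"
begin

definition partially_ordered_vs :: "('a::real_vector \<Rightarrow> 'a \<Rightarrow> bool) \<Rightarrow> bool" where
  "partially_ordered_vs le \<longleftrightarrow>
     (\<forall>x. le x x) \<and>
     (\<forall>x y. le x y \<and> le y x \<longrightarrow> x = y) \<and>
     (\<forall>x y z. le x y \<and> le y z \<longrightarrow> le x z) \<and>
     (\<forall>x y z. le x y \<longrightarrow> le (x + z) (y + z)) \<and>
     (\<forall>x y (c::real). le x y \<and> 0 \<le> c \<longrightarrow> le (c *\<^sub>R x) (c *\<^sub>R y))"

definition is_least_wrt :: "('a \<Rightarrow> 'a \<Rightarrow> bool) \<Rightarrow> 'a set \<Rightarrow> 'a \<Rightarrow> bool" where
  "is_least_wrt le S w \<longleftrightarrow> w \<in> S \<and> (\<forall>v\<in>S. le w v)"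

definition is_greatest_wrt :: "('a \<Rightarrow> 'a \<Rightarrow> bool) \<Rightarrow> 'a set \<Rightarrow> 'a \<Rightarrow> bool" where
  "is_greatest_wrt le S w \<longleftrightarrow> w \<in> S \<and> (\<forall>v\<in>S. le v w)"

definition mixed_upper :: "('a \<Rightarrow> 'a \<Rightarrow> bool) \<Rightarrow> ('a \<Rightarrow> 'a \<Rightarrow> bool) \<Rightarrow> 'a \<Rightarrow> 'a \<Rightarrow> 'a" where
  "mixed_upper le sle x y = (THE w. is_least_wrt le {w. sle x w \<and> le y w} w)"

definition mixed_lower :: "('a \<Rightarrow> 'a \<Rightarrow> bool) \<Rightarrow> ('a \<Rightarrow> 'a \<Rightarrow> bool) \<Rightarrow> 'a \<Rightarrow> 'a \<Rightarrow> 'a" where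
  "mixed_lower le sle x y = (THE w. is_greatest_wrt le {w. sle w x \<and> le w y} w)"

definition mixed_lattice_vs ::
  "('a::real_vector \<Rightarrow> 'a \<Rightarrow> bool) \<Rightarrow> ('a \<Rightarrow> 'a \<Rightarrow> bool) \<Rightarrow> bool" where
  "mixed_lattice_vs le sle \<longleftrightarrow>
     partially_ordered_vs le \<and> partially_ordered_vs sle \<and>
     (\<forall>x y. \<exists>w. is_least_wrt le {w. sle x w \<and> le y w} w) \<and>
     (\<forall>x y. \<exists>w. is_greatest_wrt le {w. sle w x \<and> le w y} w) \<and>
     (\<forall>x y. sle x y \<longrightarrow> le x y) \<and>
     (\<forall>x y. sle 0 x \<and> sle 0 y \<longrightarrow>
        sle 0 (mixed_upper le sle x y) \<and> sle 0 (mixed_lower le sle x y))"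

definition upper_part :: "('a::real_vector \<Rightarrow> 'a \<Rightarrow> bool) \<Rightarrow> ('a \<Rightarrow> 'a \<Rightarrow> bool) \<Rightarrow> 'a \<Rightarrow> 'a" where
  "upper_part le sle x = mixed_upper le sle 0 x"

definition lower_part :: "('a::real_vector \<Rightarrow> 'a \<Rightarrow> bool) \<Rightarrow> ('a \<Rightarrow> 'a \<Rightarrow> bool) \<Rightarrow> 'a \<Rightarrow> 'a" where
  "lower_part le sle x = mixed_upper le sle 0 (- x)"

definition sabs :: "('a::real_vector \<Rightarrow> 'a \<Rightarrow> bool) \<Rightarrow> ('a \<Rightarrow> 'a \<Rightarrow> bool) \<Rightarrow> 'a \<Rightarrow> 'a" where
  "sabs le sle x = upper_part le sle x + lower_part le sle x"

definition is_seminorm :: "('a::real_vector \<Rightarrow> real) \<Rightarrow> bool" where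
  "is_seminorm p \<longleftrightarrow> (\<forall>x y. p (x + y) \<le> p x + p y) \<and> (\<forall>x (c::real). p (c *\<^sub>R x) = \<bar>c\<bar> * p x)"

definition is_norm_fun :: "('a::real_vector \<Rightarrow> real) \<Rightarrow> bool" where
  "is_norm_fun p \<longleftrightarrow> is_seminorm p \<and> (\<forall>x. p x = 0 \<longrightarrow> x = 0)"

definition mixed_monotone :: "('a \<Rightarrow> 'a \<Rightarrow> bool) \<Rightarrow> ('a \<Rightarrow> 'a \<Rightarrow> bool) \<Rightarrow> ('a::real_vector \<Rightarrow> real) \<Rightarrow> bool" where
  "mixed_monotone le sle p \<longleftrightarrow> (\<forall>x y. sle 0 x \<and> le x y \<longrightarrow> p x \<le> p y)"

definition mixed_lattice_seminorm :: "('a \<Rightarrow> 'a \<Rightarrow> bool) \<Rightarrow> ('a \<Rightarrow> 'a \<Rightarrow> bool) \<Rightarrow> ('a::real_vector \<Rightarrow> real) \<Rightarrow> bool" where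
  "mixed_lattice_seminorm le sle p \<longleftrightarrow> is_seminorm p \<and>
     (\<forall>x y. le (sabs le sle x) (sabs le sle y) \<longrightarrow> p x \<le> p y)"

definition mixed_lattice_norm :: "('a \<Rightarrow> 'a \<Rightarrow> bool) \<Rightarrow> ('a \<Rightarrow> 'a \<Rightarrow> bool) \<Rightarrow> ('a::real_vector \<Rightarrow> real) \<Rightarrow> bool" where
  "mixed_lattice_norm le sle p \<longleftrightarrow> is_norm_fun p \<and>
     (\<forall>x y. le (sabs le sle x) (sabs le sle y) \<longrightarrow> p x \<le> p y)"

end

theory Submission
  imports Defs
begin

lemma po_facts:
  assumes "partially_ordered_vs le"
  shows "le x x" "le x y \<Longrightarrow> le y x \<Longrightarrow> x = y" "le x y \<Longrightarrow> le y z \<Longrightarrow> le x z"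
    "le x y \<Longrightarrow> le (x + z) (y + z)" "le x y \<Longrightarrow> 0 \<le> c \<Longrightarrow> le (c *\<^sub>R x) (c *\<^sub>R y)"
  using assms unfolding partially_ordered_vs_def by blast+

lemma lower_eq: "lower_part le sle x = upper_part le sle (- x)"
  unfolding lower_part_def upper_part_def by simp

lemma least_unique:
  assumes "partially_ordered_vs le" "is_least_wrt le S a" "is_least_wrt le S b"
  shows "a = b"
  using assms po_facts(2)[OF assms(1)] unfolding is_least_wrt_def by blast

lemma upper_least:
  assumes HML: "mixed_lattice_vs le sle"
  shows "is_least_wrt le {w. sle 0 w \<and> le x w} (upper_part le sle x)"
proof -
  have po: "partially_ordered_vs le" using HML unfolding mixed_lattice_vs_def by blast
  obtain w where w: "is_least_wrt le {w. sle 0 w \<and> le x w} w"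
    using HML unfolding mixed_lattice_vs_def by blast
  have "(THE w. is_least_wrt le {w. sle 0 w \<and> le x w} w) = w"
    using w least_unique[OF po] by (intro the_equality) auto
  thus ?thesis using w unfolding upper_part_def mixed_upper_def by simp
qed

lemma upper_scale:
  assumes HML: "mixed_lattice_vs le sle" and c: "0 < c"
  shows "upper_part le sle (c *\<^sub>R x) = c *\<^sub>R upper_part le sle x"
proof -
  have po: "partially_ordered_vs le" and spo: "partially_ordered_vs sle"
    using HML unfolding mixed_lattice_vs_def by blast+
  let ?u = "upper_part le sle x"
  have u: "is_least_wrt le {w. sle 0 w \<and> le x w} ?u" by (rule upper_least[OF HML])
  have "is_least_wrt le {w. sle 0 w \<and> le (c *\<^sub>R x) w} (c *\<^sub>R ?u)"
    unfolding is_least_wrt_def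
  proof (intro conjI ballI)
    show "c *\<^sub>R ?u \<in> {w. sle 0 w \<and> le (c *\<^sub>R x) w}"
      using u po_facts(5)[OF spo, of 0 ?u c] po_facts(5)[OF po, of x ?u c] c
      unfolding is_least_wrt_def by auto
  next
    fix v assume v: "v \<in> {w. sle 0 w \<and> le (c *\<^sub>R x) w}"
    have "sle 0 ((1/c) *\<^sub>R v)" using v po_facts(5)[OF spo, of 0 v "1/c"] c by auto
    moreover have "le x ((1/c) *\<^sub>R v)" using v po_facts(5)[OF po, of "c *\<^sub>R x" v "1/c"] c by auto
    ultimately have "le ?u ((1/c) *\<^sub>R v)" using u unfolding is_least_wrt_def by auto
    hence "le (c *\<^sub>R ?u) (c *\<^sub>R ((1/c) *\<^sub>R v))" using po_facts(5)[OF po, of ?u "(1/c) *\<^sub>R v" c] c by simp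
    thus "le (c *\<^sub>R ?u) v" using c by simp
  qed
  thus ?thesis using least_unique[OF po] upper_least[OF HML] by blast
qed

lemma upper_zero:
  assumes HML: "mixed_lattice_vs le sle"
  shows "upper_part le sle 0 = 0"
proof -
  have po: "partially_ordered_vs le" and spo: "partially_ordered_vs sle"
    using HML unfolding mixed_lattice_vs_def by blast+
  have "is_least_wrt le {w. sle 0 w \<and> le 0 w} 0"
    unfolding is_least_wrt_def using po_facts(1)[OF po] po_facts(1)[OF spo] by auto
  thus ?thesis using least_unique[OF po] upper_least[OF HML] by blast
qed

lemma sabs_scale:
  assumes HML: "mixed_lattice_vs le sle"
  shows "sabs le sle (c *\<^sub>R x) = \<bar>c\<bar> *\<^sub>R sabs le sle x"
proof (cases "c > 0")
  case True
  thus ?thesis unfolding sabs_def lower_eq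
    using upper_scale[OF HML True, of x] upper_scale[OF HML True, of "-x"]
    by (simp add: scaleR_add_right)
next
  case False
  show ?thesis
  proof (cases "c = 0")
    case True thus ?thesis unfolding sabs_def lower_eq using upper_zero[OF HML] by simp
  next
    case False2: False
    hence c: "0 < -c" using False by simp
    have "upper_part le sle (c *\<^sub>R x) = upper_part le sle ((-c) *\<^sub>R (-x))" by simp
    also have "\<dots> = (-c) *\<^sub>R upper_part le sle (-x)" by (rule upper_scale[OF HML c])
    finally have 1: "upper_part le sle (c *\<^sub>R x) = (-c) *\<^sub>R upper_part le sle (-x)" .
    have "upper_part le sle (- (c *\<^sub>R x)) = upper_part le sle ((-c) *\<^sub>R x)" by simp
    also have "\<dots> = (-c) *\<^sub>R upper_part le sle x" by (rule upper_scale[OF HML c])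
    finally have 2: "upper_part le sle (- (c *\<^sub>R x)) = (-c) *\<^sub>R upper_part le sle x" .
    have "\<bar>c\<bar> = -c" using c by simp
    thus ?thesis unfolding sabs_def lower_eq using 1 2
      by (simp add: scaleR_add_right add.commute)
  qed
qed

lemma upper_subadd:
  assumes HML: "mixed_lattice_vs le sle"
  shows "le (upper_part le sle (x + y)) (upper_part le sle x + upper_part le sle y)"
proof -
  have po: "partially_ordered_vs le" and spo: "partially_ordered_vs sle"
    using HML unfolding mixed_lattice_vs_def by blast+
  let ?a = "upper_part le sle x" and ?b = "upper_part le sle y"
  have a: "sle 0 ?a" "le x ?a" and b: "sle 0 ?b" "le y ?b"
    using upper_least[OF HML, of x] upper_least[OF HML, of y] unfolding is_least_wrt_def by auto
  have "sle (0 + ?b) (?a + ?b)" using po_facts(4)[OF spo a(1)] .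
  hence s: "sle 0 (?a + ?b)" using po_facts(3)[OF spo b(1)] by simp
  have "le (x + y) (?a + y)" using po_facts(4)[OF po a(2)] .
  moreover have "le (y + ?a) (?b + ?a)" using po_facts(4)[OF po b(2)] .
  ultimately have "le (x + y) (?a + ?b)" using po_facts(3)[OF po] by (simp add: add.commute)
  thus ?thesis using s upper_least[OF HML, of "x+y"] unfolding is_least_wrt_def by auto
qed

lemma sabs_subadd:
  assumes HML: "mixed_lattice_vs le sle"
  shows "le (sabs le sle (x + y)) (sabs le sle x + sabs le sle y)"
proof -
  have po: "partially_ordered_vs le"
    using HML unfolding mixed_lattice_vs_def by blast+
  let ?U = "upper_part le sle"
  have 1: "le (?U (x+y)) (?U x + ?U y)" by (rule upper_subadd[OF HML])
  have 2: "le (?U (-(x+y))) (?U (-x) + ?U (-y))" using upper_subadd[OF HML, of "-x" "-y"] by simp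
  have "le (?U (x+y) + ?U (-(x+y))) (?U x + ?U y + ?U (-(x+y)))" using po_facts(4)[OF po 1] .
  moreover have "le (?U (-(x+y)) + (?U x + ?U y)) (?U (-x) + ?U (-y) + (?U x + ?U y))"
    using po_facts(4)[OF po 2] .
  ultimately show ?thesis unfolding sabs_def lower_eq using po_facts(3)[OF po]
    by (simp add: algebra_simps)
qed

lemma sabs_pos:
  assumes HML: "mixed_lattice_vs le sle"
  shows "sle 0 (sabs le sle x)"
proof -
  have spo: "partially_ordered_vs sle"
    using HML unfolding mixed_lattice_vs_def by blast+
  have a: "sle 0 (upper_part le sle x)" and b: "sle 0 (upper_part le sle (-x))"
    using upper_least[OF HML, of x] upper_least[OF HML, of "-x"] unfolding is_least_wrt_def by auto
  have "sle (0 + upper_part le sle (-x)) (upper_part le sle x + upper_part le sle (-x))"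
    using po_facts(4)[OF spo a] .
  thus ?thesis unfolding sabs_def lower_eq using po_facts(3)[OF spo b] by simp
qed

lemma sabs_zero:
  assumes HML: "mixed_lattice_vs le sle" and z: "sabs le sle x = 0"
  shows "x = 0"
proof -
  have po: "partially_ordered_vs le"
    using HML unfolding mixed_lattice_vs_def by blast+
  have sl: "\<And>a b. sle a b \<Longrightarrow> le a b" using HML unfolding mixed_lattice_vs_def by blast
  let ?a = "upper_part le sle x" and ?b = "upper_part le sle (-x)"
  have a: "sle 0 ?a" "le x ?a" and b: "sle 0 ?b" "le (-x) ?b"
    using upper_least[OF HML, of x] upper_least[OF HML, of "-x"] unfolding is_least_wrt_def by auto
  have eq: "?b = - ?a" using z unfolding sabs_def lower_eq by (simp add: eq_neg_iff_add_eq_0 add.commute)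
  have "le 0 (- ?a)" using sl[OF b(1)] eq by simp
  hence "le (0 + ?a) (- ?a + ?a)" by (rule po_facts(4)[OF po])
  hence "le ?a 0" by simp
  hence a0: "?a = 0" using po_facts(2)[OF po] sl[OF a(1)] by blast
  hence b0: "?b = 0" using eq by simp
  have "le x 0" using a(2) a0 by simp
  moreover have "le (-x + x) (0 + x)" using po_facts(4)[OF po, of "-x" 0 x] b(2) b0 by simp
  ultimately show ?thesis using po_facts(2)[OF po] by simp
qed

lemma q_seminorm:
  assumes HML: "mixed_lattice_vs le sle" and sp: "is_seminorm p" and mm: "mixed_monotone le sle p"
  shows "mixed_lattice_seminorm le sle (\<lambda>x. p (sabs le sle x))"
proof -
  have a: "p (x+y) \<le> p x + p y" and h: "p (c *\<^sub>R x) = \<bar>c\<bar> * p x" for x y c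
    using sp unfolding is_seminorm_def by auto
  have mono: "le (sabs le sle x) z \<Longrightarrow> p (sabs le sle x) \<le> p z" for x z
    using mm sabs_pos[OF HML] unfolding mixed_monotone_def by blast
  show ?thesis unfolding mixed_lattice_seminorm_def is_seminorm_def
  proof (intro conjI allI impI)
    fix x y
    have "p (sabs le sle (x+y)) \<le> p (sabs le sle x + sabs le sle y)"
      by (rule mono[OF sabs_subadd[OF HML]])
    also have "\<dots> \<le> p (sabs le sle x) + p (sabs le sle y)" by (rule a)
    finally show "p (sabs le sle (x+y)) \<le> p (sabs le sle x) + p (sabs le sle y)" .
  next
    fix x and c :: real
    show "p (sabs le sle (c *\<^sub>R x)) = \<bar>c\<bar> * p (sabs le sle x)"
      using sabs_scale[OF HML] h by simp
  next
    fix x y assume "le (sabs le sle x) (sabs le sle y)"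
    thus "p (sabs le sle x) \<le> p (sabs le sle y)" by (rule mono)
  qed
qed

theorem proposition4p5:
  fixes le sle :: "'a::real_vector \<Rightarrow> 'a \<Rightarrow> bool" and p :: "'a \<Rightarrow> real"
  assumes "mixed_lattice_vs le sle"
  shows "(is_seminorm p \<and> mixed_monotone le sle p \<longrightarrow>
            mixed_lattice_seminorm le sle (\<lambda>x. p (sabs le sle x)))
       \<and> (is_norm_fun p \<and> mixed_monotone le sle p \<longrightarrow>
            mixed_lattice_norm le sle (\<lambda>x. p (sabs le sle x)))"
proof (intro conjI impI)
  assume "is_seminorm p \<and> mixed_monotone le sle p"
  thus "mixed_lattice_seminorm le sle (\<lambda>x. p (sabs le sle x))"
    using q_seminorm[OF assms] by blast
next
  assume A: "is_norm_fun p \<and> mixed_monotone le sle p"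
  hence S: "mixed_lattice_seminorm le sle (\<lambda>x. p (sabs le sle x))"
    using q_seminorm[OF assms] unfolding is_norm_fun_def by blast
  have "p (sabs le sle x) = 0 \<Longrightarrow> x = 0" for x
    using A sabs_zero[OF assms] unfolding is_norm_fun_def by blast
  thus "mixed_lattice_norm le sle (\<lambda>x. p (sabs le sle x))"
    using S unfolding mixed_lattice_norm_def mixed_lattice_seminorm_def is_norm_fun_def by blast
qed

end
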